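(* Let $a<b$ be real numbers and let $h:[a,b]\to\mathbb{R}$ have a continuous first derivative that is uniformly bounded on $[a,b]$. For $n\ge2$ define the deterministic inputs $x_{i,n}=a+(b-a)\frac{i-1}{n-1}$, $i=1,\dots,n$. Then $$B_n^0=\frac{1}{\sqrt n}\sum_{i=2}^n\big|h(x_{i,n})-h(x_{i-1,n})\big|$$ is bounded as $n\to\infty$. Moreover, let $\varepsilon_1,\varepsilon_2,\dots$ be i.i.d. random variables with cdf $F_\varepsilon$, mean $0$ and finite variance, put $Y_{i,n}=h(x_{i,n})+\varepsilon_i$ and $$B_n=\frac{1}{\sqrt n}\sum_{i=2}^n\big|Y_{i,n}-Y_{i-1,n}\big|.$$ If $B_n=O_{\mathbf P}(1)$ as $n\to\infty$, then $F_\varepsilon$ is degenerate at $0$.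
   Context: $\xi_n=O_{\mathbf P}(1)$ means the sequence of random variables $\xi_n$ is bounded in probability: for every $\delta>0$ there exist $M$ and $n_0$ with $\mathbf P(|\xi_n|>M)<\delta$ for all $n\ge n_0$. *)

theory Defs
  imports "HOL-Probability.Probability"
begin

definition design :: "real \<Rightarrow> real \<Rightarrow> nat \<Rightarrow> nat \<Rightarrow> real" where
  "design a b n i = a + (b - a) * (real i - 1) / (real n - 1)"

definition Bzero :: "(real \<Rightarrow> real) \<Rightarrow> real \<Rightarrow> real \<Rightarrow> nat \<Rightarrow> real" where
  "Bzero h a b n = (1 / sqrt (real n)) *
     (\<Sum>i=2..n. \<bar>h (design a b n i) - h (design a b n (i - 1))\<bar>)"

definition Yobs :: "(real \<Rightarrow> real) \<Rightarrow> real \<Rightarrow> real \<Rightarrow> (nat \<Rightarrow> 'a \<Rightarrow> real) \<Rightarrow> nat \<Rightarrow> nat \<Rightarrow> 'a \<Rightarrow> real" where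
  "Yobs h a b eps n i \<omega> = h (design a b n i) + eps i \<omega>"

definition Bstat :: "(real \<Rightarrow> real) \<Rightarrow> real \<Rightarrow> real \<Rightarrow> (nat \<Rightarrow> 'a \<Rightarrow> real) \<Rightarrow> nat \<Rightarrow> 'a \<Rightarrow> real" where
  "Bstat h a b eps n \<omega> = (1 / sqrt (real n)) *
     (\<Sum>i=2..n. \<bar>Yobs h a b eps n i \<omega> - Yobs h a b eps n (i - 1) \<omega>\<bar>)"

definition bounded_in_prob :: "'a measure \<Rightarrow> (nat \<Rightarrow> 'a \<Rightarrow> real) \<Rightarrow> bool" where
  "bounded_in_prob M X \<longleftrightarrow>
     (\<forall>\<delta>>0. \<exists>C n0. \<forall>n\<ge>n0. measure M {\<omega>\<in>space M. \<bar>X n \<omega>\<bar> > C} < \<delta>)"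

end

theory Submission
  imports Defs
begin


lemma lip_h:
  fixes h h' :: "real \<Rightarrow> real"
  assumes d: "\<forall>x\<in>{a..b}. (h has_real_derivative h' x) (at x within {a..b})"
    and K: "\<forall>x\<in>{a..b}. \<bar>h' x\<bar> \<le> K"
    and x: "x \<in> {a..b}" and y: "y \<in> {a..b}"
  shows "\<bar>h x - h y\<bar> \<le> K * \<bar>x - y\<bar>"
proof -
  have "norm (h x - h y) \<le> K * norm (x - y)"
  proof (rule differentiable_bound[where f'="\<lambda>x. (*) (h' x)"])
    show "convex {a..b}" by simp
    fix z assume z: "z \<in> {a..b}"
    show "(h has_derivative (*) (h' z)) (at z within {a..b})"
      using d z by (simp add: has_field_derivative_def)
    have e: "(\<lambda>t::real. t *\<^sub>R h' z) = (*) (h' z)" by (auto simp: fun_eq_iff)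
    have "onorm (\<lambda>t::real. t *\<^sub>R h' z) = \<bar>h' z\<bar>"
      using onorm_scaleR_left[of "\<lambda>t::real. t" "h' z"] onorm_id[where 'a=real]
      by (simp add: bounded_linear_ident)
    then show "onorm ((*) (h' z)) \<le> K" using K z e by simp
  qed (use x y in auto)
  then show ?thesis by simp
qed

lemma design_in:
  assumes "a < b" "2 \<le> n" "1 \<le> i" "i \<le> n"
  shows "design a b n i \<in> {a..b}"
proof -
  have n1: "real n - 1 > 0" using assms by simp
  define c where "c = (real i - 1) / (real n - 1)"
  have c: "0 \<le> c" "c \<le> 1"
    using assms n1 by (auto simp: field_simps c_def)
  have "0 \<le> (b-a) * c" using c assms by simp
  moreover have "(b-a) * c \<le> (b-a)" by (rule mult_left_le) (use c assms in auto)
  ultimately have "0 \<le> (b-a) * ((real i - 1) / (real n - 1))" "(b-a) * ((real i - 1) / (real n - 1)) \<le> (b-a)"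
    unfolding c_def by auto
  moreover have "design a b n i = a + (b-a) * ((real i - 1) / (real n - 1))" by (simp add: design_def)
  ultimately show ?thesis by auto
qed

lemma design_diff:
  assumes "2 \<le> n" "2 \<le> i"
  shows "design a b n i - design a b n (i - 1) = (b - a) / (real n - 1)"
proof -
  have n1: "real n - 1 \<noteq> 0" using assms by simp
  have "real (i - 1) = real i - 1" using assms by simp
  have "design a b n i - design a b n (i - 1) = (b-a)*((real i - 1) - (real (i-1) - 1))/(real n - 1)"
    by (simp add: design_def diff_divide_distrib right_diff_distrib)
  then show ?thesis using \<open>real (i - 1) = real i - 1\<close> by simp
qed

lemma Bzero_bound:
  fixes h h' :: "real \<Rightarrow> real"
  assumes ab: "a < b"
    and d: "\<forall>x\<in>{a..b}. (h has_real_derivative h' x) (at x within {a..b})"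
    and K: "\<forall>x\<in>{a..b}. \<bar>h' x\<bar> \<le> K"
  shows "\<bar>Bzero h a b n\<bar> \<le> \<bar>K\<bar> * (b - a)"
proof (cases "2 \<le> n")
  case False
  then have "{2..n} = {}" by auto
  then show ?thesis using ab by (simp add: Bzero_def)
next
  case True
  have "(\<Sum>i=2..n. \<bar>h (design a b n i) - h (design a b n (i - 1))\<bar>) \<le> (\<Sum>i=2..n. \<bar>K\<bar> * ((b - a) / (real n - 1)))"
  proof (rule sum_mono)
    fix i assume i: "i \<in> {2..n}"
    have "\<bar>h (design a b n i) - h (design a b n (i - 1))\<bar> \<le> K * \<bar>design a b n i - design a b n (i - 1)\<bar>"
      by (rule lip_h[OF d K]) (use i design_in[OF ab True, of i] design_in[OF ab True, of "i-1"] in auto)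
    also have "\<dots> = K * ((b - a) / (real n - 1))" using design_diff[OF True, of i a b] i ab True by simp
    also have "\<dots> \<le> \<bar>K\<bar> * ((b - a) / (real n - 1))" using ab True by (intro mult_right_mono) auto
    finally show "\<bar>h (design a b n i) - h (design a b n (i - 1))\<bar> \<le> \<bar>K\<bar> * ((b - a) / (real n - 1))" .
  qed
  also have "\<dots> = \<bar>K\<bar> * (b - a)" using True by (simp add: of_nat_diff)
  finally have S: "(\<Sum>i=2..n. \<bar>h (design a b n i) - h (design a b n (i - 1))\<bar>) \<le> \<bar>K\<bar> * (b - a)" .
  have sq: "1 \<le> sqrt (real n)" using True by simp
  have nn: "0 \<le> (\<Sum>i=2..n. \<bar>h (design a b n i) - h (design a b n (i - 1))\<bar>)" by (simp add: sum_nonneg)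
  have "\<bar>Bzero h a b n\<bar> = (\<Sum>i=2..n. \<bar>h (design a b n i) - h (design a b n (i - 1))\<bar>) / sqrt (real n)"
    unfolding Bzero_def using nn by simp
  also have "\<dots> \<le> (\<Sum>i=2..n. \<bar>h (design a b n i) - h (design a b n (i - 1))\<bar>)"
    using divide_left_mono[OF sq nn] sq by simp
  finally show ?thesis using S by simp
qed




context prob_space begin

lemma prob_ne0: "prob A \<noteq> 0 \<Longrightarrow> prob A > 0"
  using measure_nonneg[of M A] by linarith

lemma prob_not_pos: "\<not> prob A > 0 \<Longrightarrow> prob A = 0"
  using measure_nonneg[of M A] by linarith

lemma AE_le_of_prob0:
  assumes [measurable]: "X \<in> borel_measurable M"
    and p: "\<forall>n::nat. prob {\<omega>\<in>space M. X \<omega> \<ge> inverse (real (Suc n))} = 0"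
  shows "AE \<omega> in M. X \<omega> \<le> 0"
proof -
  have "\<forall>n::nat. AE \<omega> in M. X \<omega> < inverse (real (Suc n))"
  proof
    fix n :: nat
    have "AE \<omega> in M. \<omega> \<notin> {\<omega>\<in>space M. X \<omega> \<ge> inverse (real (Suc n))}"
      using p by (subst prob_eq_0[symmetric]) auto
    then show "AE \<omega> in M. X \<omega> < inverse (real (Suc n))"
      by (rule AE_mp) (auto intro!: AE_I2)
  qed
  then have "AE \<omega> in M. \<forall>n::nat. X \<omega> < inverse (real (Suc n))"
    by (simp add: AE_all_countable)
  then show ?thesis
  proof (rule AE_mp, intro AE_I2 impI)
    fix \<omega> assume h: "\<forall>n::nat. X \<omega> < inverse (real (Suc n))"
    show "X \<omega> \<le> 0"
    proof (rule ccontr)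
      assume "\<not> X \<omega> \<le> 0"
      then have "0 < X \<omega>" by simp
      from ex_inverse_of_nat_less[OF this] obtain n :: nat where n: "n > 0" "inverse (real n) < X \<omega>"
        by blast
      have "Suc (n - 1) = n" using n(1) by simp
      moreover have "X \<omega> < inverse (real (Suc (n - 1)))" using h by blast
      ultimately show False using n(2) by simp
    qed
  qed
qed

lemma nondeg:
  assumes [measurable]: "X \<in> borel_measurable M"
    and int: "integrable M X" and E: "expectation X = 0"
    and ne: "cdf (distr M borel X) \<noteq> (\<lambda>x. if 0 \<le> x then 1 else 0)"
  shows "\<exists>t1 t2. t1 < t2 \<and> prob {\<omega>\<in>space M. X \<omega> \<le> t1} > 0 \<and> prob {\<omega>\<in>space M. X \<omega> \<ge> t2} > 0"
proof (rule ccontr)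
  assume H: "\<not> ?thesis"
  have H': False if "t1 < t2" "prob {\<omega>\<in>space M. X \<omega> \<le> t1} > 0" "prob {\<omega>\<in>space M. X \<omega> \<ge> t2} > 0" for t1 t2
    using H that by blast
  have pos: "prob {\<omega>\<in>space M. X \<omega> \<ge> s} = 0" if s: "s > 0" for s
  proof (rule ccontr)
    assume "prob {\<omega>\<in>space M. X \<omega> \<ge> s} \<noteq> 0"
    then have "prob {\<omega>\<in>space M. X \<omega> \<ge> s} > 0" using prob_ne0 prob_not_pos by blast
    then have "\<not> prob {\<omega>\<in>space M. X \<omega> \<le> s/2} > 0" using H'[of "s/2" s] s by auto
    then have "prob {\<omega>\<in>space M. X \<omega> \<le> s/2} = 0" using prob_ne0 prob_not_pos by blast
    then have "AE \<omega> in M. \<omega> \<notin> {\<omega>\<in>space M. X \<omega> \<le> s/2}" by (subst prob_eq_0[symmetric]) auto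
    then have "AE \<omega> in M. s/2 \<le> X \<omega>" by (rule AE_mp) (auto intro!: AE_I2)
    then have "(\<integral>\<omega>. s/2 \<partial>M) \<le> expectation X" by (intro integral_mono_AE) (use int in auto)
    then show False using E s by (simp add: prob_space)
  qed
  have neg: "prob {\<omega>\<in>space M. X \<omega> \<le> - s} = 0" if s: "s > 0" for s
  proof (rule ccontr)
    assume "prob {\<omega>\<in>space M. X \<omega> \<le> - s} \<noteq> 0"
    then have "prob {\<omega>\<in>space M. X \<omega> \<le> - s} > 0" using prob_ne0 prob_not_pos by blast
    then have "\<not> prob {\<omega>\<in>space M. X \<omega> \<ge> - s/2} > 0" using H'[of "- s" "- s/2"] s by auto
    then have "prob {\<omega>\<in>space M. X \<omega> \<ge> - s/2} = 0" using prob_ne0 prob_not_pos by blast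
    then have "AE \<omega> in M. \<omega> \<notin> {\<omega>\<in>space M. X \<omega> \<ge> - s/2}" by (subst prob_eq_0[symmetric]) auto
    then have "AE \<omega> in M. X \<omega> \<le> - s/2" by (rule AE_mp) (auto intro!: AE_I2)
    then have "expectation X \<le> (\<integral>\<omega>. - s/2 \<partial>M)" by (intro integral_mono_AE) (use int in auto)
    then show False using E s by (simp add: prob_space)
  qed
  have A1: "AE \<omega> in M. X \<omega> \<le> 0"
    by (rule AE_le_of_prob0) (auto intro!: pos)
  have A2': "AE \<omega> in M. - X \<omega> \<le> 0"
  proof (rule AE_le_of_prob0)
    show "\<forall>n. prob {\<omega> \<in> space M. inverse (real (Suc n)) \<le> - X \<omega>} = 0"
    proof
      fix n
      have "{\<omega> \<in> space M. inverse (real (Suc n)) \<le> - X \<omega>} = {\<omega>\<in>space M. X \<omega> \<le> - inverse (real (Suc n))}"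
        by auto
      then show "prob {\<omega> \<in> space M. inverse (real (Suc n)) \<le> - X \<omega>} = 0"
        using neg[of "inverse (real (Suc n))"] by simp
    qed
  qed simp
  have "cdf (distr M borel X) = (\<lambda>x. if 0 \<le> x then 1 else 0)"
  proof
    fix x
    have c: "cdf (distr M borel X) x = prob {\<omega>\<in>space M. X \<omega> \<le> x}"
      unfolding cdf_def by (subst measure_distr) (auto intro!: arg_cong[where f="measure M"])
    show "cdf (distr M borel X) x = (if 0 \<le> x then 1 else 0)"
    proof (cases "0 \<le> x")
      case True
      have "AE \<omega> in M. \<omega> \<in> {\<omega>\<in>space M. X \<omega> \<le> x}"
        using A1 by (rule AE_mp) (use True in \<open>auto intro!: AE_I2\<close>)
      then have "prob {\<omega>\<in>space M. X \<omega> \<le> x} = 1" by (subst prob_eq_1) auto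
      then show ?thesis using c True by simp
    next
      case False
      have "AE \<omega> in M. \<omega> \<notin> {\<omega>\<in>space M. X \<omega> \<le> x}"
        using A2' by (rule AE_mp) (use False in \<open>auto intro!: AE_I2\<close>)
      then have "prob {\<omega>\<in>space M. X \<omega> \<le> x} = 0" by (subst prob_eq_0) auto
      then show ?thesis using c False by simp
    qed
  qed
  then show False using ne by simp
qed

end



context prob_space begin

lemma intI: "A \<in> sets M \<Longrightarrow> integrable M (indicator A :: 'a \<Rightarrow> real)"
  by (rule integrable_real_indicator) (auto simp: less_top[symmetric])

lemma count_conc:
  fixes E :: "nat \<Rightarrow> 'a set" and p :: real
  assumes ev: "\<And>k. E k \<in> sets M" and pE: "\<And>k. prob (E k) = p"
    and pEE: "\<And>k l. k \<noteq> l \<Longrightarrow> prob (E k \<inter> E l) = p^2"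
    and m: "m > 0" and p: "p > 0"
  shows "prob {\<omega>\<in>space M. (\<Sum>k<m. indicator (E k) \<omega>) \<le> real m * p / 2} \<le> 4 / (real m * p)"
proof -
  define D where "D k \<omega> = indicator (E k) \<omega> - p" for k \<omega>
  have DD: "D k \<omega> * D l \<omega> = indicator (E k \<inter> E l) \<omega> - p * indicator (E k) \<omega> - p * indicator (E l) \<omega> + p^2" for k l \<omega>
    unfolding D_def by (simp add: indicator_inter_arith algebra_simps power2_eq_square)
  have iDD: "integrable M (\<lambda>\<omega>. D k \<omega> * D l \<omega>)" for k l
    unfolding DD using ev intI by (intro Bochner_Integration.integrable_add Bochner_Integration.integrable_diff
      integrable_mult_right) (auto intro!: sets.Int)
  have eDD: "(\<integral>\<omega>. D k \<omega> * D l \<omega> \<partial>M) = (if k = l then p - p^2 else 0)" for k l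
  proof -
    have "(\<integral>\<omega>. D k \<omega> * D l \<omega> \<partial>M) = prob (E k \<inter> E l) - p * prob (E k) - p * prob (E l) + p^2"
      unfolding DD using ev intI[of "E k \<inter> E l"] intI[of "E k"] intI[of "E l"]
      by (simp add: sets.Int prob_space)
    then show ?thesis using pE pEE by (simp add: power2_eq_square)
  qed
  have sqe: "(\<Sum>k<m. D k \<omega>)^2 = (\<Sum>k<m. \<Sum>l<m. D k \<omega> * D l \<omega>)" for \<omega>
    by (simp add: power2_eq_square sum_product)
  have isq: "integrable M (\<lambda>\<omega>. (\<Sum>k<m. D k \<omega>)^2)"
    unfolding sqe using iDD by auto
  have esq: "(\<integral>\<omega>. (\<Sum>k<m. D k \<omega>)^2 \<partial>M) = real m * (p - p^2)"
  proof -
    have "(\<integral>\<omega>. (\<Sum>k<m. D k \<omega>)^2 \<partial>M) = (\<Sum>k<m. \<Sum>l<m. (\<integral>\<omega>. D k \<omega> * D l \<omega> \<partial>M))"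
      unfolding sqe using iDD by (simp add: integral_sum)
    also have "\<dots> = (\<Sum>k<m. p - p^2)" unfolding eDD by (intro sum.cong refl) (simp add: sum.delta)
    finally show ?thesis by simp
  qed
  have c: "0 < (real m * p / 2)^2" using m p by simp
  have mk: "prob {\<omega>\<in>space M. (\<Sum>k<m. D k \<omega>)^2 \<ge> (real m * p / 2)^2} \<le> (\<integral>\<omega>. (\<Sum>k<m. D k \<omega>)^2 \<partial>M) / (real m * p / 2)^2"
    by (rule integral_Markov_inequality_measure[OF isq _ _ c, of "space M"]) auto
  have sub: "{\<omega>\<in>space M. (\<Sum>k<m. indicator (E k) \<omega>) \<le> real m * p / 2} \<subseteq> {\<omega>\<in>space M. (\<Sum>k<m. D k \<omega>)^2 \<ge> (real m * p / 2)^2}"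
  proof safe
    fix \<omega> assume \<omega>: "\<omega> \<in> space M" "(\<Sum>k<m. indicator (E k) \<omega>) \<le> real m * p / 2"
    have "(\<Sum>k<m. D k \<omega>) = (\<Sum>k<m. indicator (E k) \<omega>) - real m * p"
      unfolding D_def by (simp add: sum_subtractf)
    then have "(\<Sum>k<m. D k \<omega>) \<le> - (real m * p / 2)" "0 \<le> real m * p / 2" using \<omega> m p by auto
    then show "(real m * p / 2)^2 \<le> (\<Sum>k<m. D k \<omega>)^2"
      using power_mono[of "real m * p / 2" "- (\<Sum>k<m. D k \<omega>)" 2] by simp
  qed
  have "prob {\<omega>\<in>space M. (\<Sum>k<m. indicator (E k) \<omega>) \<le> real m * p / 2} \<le> prob {\<omega>\<in>space M. (\<Sum>k<m. D k \<omega>)^2 \<ge> (real m * p / 2)^2}"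
  proof (rule finite_measure_mono[OF sub])
    have "(\<lambda>\<omega>. (\<Sum>k<m. D k \<omega>)^2) \<in> borel_measurable M" using isq by auto
    then show "{\<omega>\<in>space M. (\<Sum>k<m. D k \<omega>)^2 \<ge> (real m * p / 2)^2} \<in> sets M" by measurable
  qed
  also have "\<dots> \<le> real m * (p - p^2) / (real m * p / 2)^2" using mk esq by simp
  also have "\<dots> = 4 * (1 - p) / (real m * p)" using m p by (simp add: field_simps power2_eq_square)
  also have "\<dots> \<le> 4 / (real m * p)" using m p by (intro divide_right_mono) auto
  finally show ?thesis .
qed

end



lemma real_bound:
  fixes g p m K :: real
  assumes g: "g > 0" and p: "p > 0" and m: "m > 0" and K: "K \<ge> 0"
    and s: "sqrt m \<ge> 4 * K / (g * p)"
  shows "g * (m * p / 2) / sqrt (2 * m) \<ge> K"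
proof -
  have s2: "sqrt (2 * m) \<le> 2 * sqrt m"
  proof -
    have "sqrt (2 * m) \<le> sqrt (4 * m)" using m by simp
    also have "\<dots> = 2 * sqrt m" by (simp add: real_sqrt_mult)
    finally show ?thesis .
  qed
  have sm: "sqrt m > 0" using m by simp
  have "4 * K \<le> sqrt m * (g * p)" using s g p by (simp add: divide_le_eq)
  then have "4 * K * sqrt m \<le> sqrt m * (g * p) * sqrt m" using sm by (intro mult_right_mono) auto
  also have "\<dots> = g * p * m" using m by (simp add: algebra_simps)
  finally have A: "4 * K * sqrt m \<le> g * p * m" .
  have "2 * K * sqrt (2 * m) \<le> 2 * K * (2 * sqrt m)" using s2 K by (intro mult_left_mono) auto
  with A have "2 * K * sqrt (2 * m) \<le> g * p * m" by simp
  moreover have "sqrt (2 * m) > 0" using m by simp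
  ultimately show ?thesis by (simp add: field_simps)
qed




context prob_space begin

lemma Bstat_meas:
  assumes meas: "\<forall>i\<ge>1. eps i \<in> borel_measurable M"
  shows "(\<lambda>\<omega>. Bstat h a b eps n \<omega>) \<in> borel_measurable M"
  unfolding Bstat_def Yobs_def
proof (intro borel_measurable_times borel_measurable_const borel_measurable_sum borel_measurable_abs
    borel_measurable_diff borel_measurable_add)
  fix i assume "i \<in> {2..n}"
  then show "eps i \<in> borel_measurable M" "eps (i - 1) \<in> borel_measurable M" using meas by auto
qed

lemma Bstat_lower:
  assumes C0: "\<forall>n. \<bar>Bzero h a b n\<bar> \<le> C0" and n: "n > 0"
  shows "Bstat h a b eps n \<omega> \<ge> (\<Sum>i=2..n. \<bar>eps i \<omega> - eps (i - 1) \<omega>\<bar>) / sqrt (real n) - C0"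
proof -
  let ?hd = "\<lambda>i. h (design a b n i) - h (design a b n (i - 1))"
  have "(\<Sum>i=2..n. \<bar>eps i \<omega> - eps (i - 1) \<omega>\<bar>) - (\<Sum>i=2..n. \<bar>?hd i\<bar>) \<le> (\<Sum>i=2..n. \<bar>Yobs h a b eps n i \<omega> - Yobs h a b eps n (i - 1) \<omega>\<bar>)"
    unfolding sum_subtractf[symmetric] Yobs_def by (intro sum_mono) auto
  then have "(\<Sum>i=2..n. \<bar>eps i \<omega> - eps (i - 1) \<omega>\<bar>) / sqrt (real n) - (\<Sum>i=2..n. \<bar>?hd i\<bar>) / sqrt (real n) \<le> Bstat h a b eps n \<omega>"
    unfolding Bstat_def using n by (simp add: diff_divide_distrib[symmetric] divide_right_mono)
  moreover have "(\<Sum>i=2..n. \<bar>?hd i\<bar>) / sqrt (real n) \<le> C0"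
    using C0[rule_format, of n] unfolding Bzero_def by (simp add: sum_nonneg)
  ultimately show ?thesis by linarith
qed

lemma sum_even_le:
  fixes f :: "nat \<Rightarrow> real"
  assumes "\<And>i. f i \<ge> 0"
  shows "(\<Sum>k<m. f (2*k+2)) \<le> (\<Sum>i=2..2*m. f i)"
proof -
  have "(\<Sum>k<m. f (2*k+2)) = (\<Sum>i\<in>(\<lambda>k. 2*k+2) ` {..<m}. f i)"
    by (subst sum.reindex) (auto simp: inj_on_def)
  also have "\<dots> \<le> (\<Sum>i=2..2*m. f i)"
    by (intro sum_mono2) (auto simp: assms)
  finally show ?thesis .
qed

end



context prob_space begin

lemma main_contra:
  fixes eps :: "nat \<Rightarrow> 'a \<Rightarrow> real"
  assumes meas: "\<forall>i\<ge>1. eps i \<in> borel_measurable M"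
    and ind: "indep_vars (\<lambda>_. borel) eps {1..}"
    and idd: "\<forall>i\<ge>1. distr M borel (eps i) = distr M borel (eps 1)"
    and t: "t1 < t2" "prob {\<omega>\<in>space M. eps 1 \<omega> \<le> t1} > 0" "prob {\<omega>\<in>space M. eps 1 \<omega> \<ge> t2} > 0"
    and C0: "\<forall>n. \<bar>Bzero h a b n\<bar> \<le> C0"
  shows "\<not> bounded_in_prob M (\<lambda>n. Bstat h a b eps n)"
proof
  assume bp: "bounded_in_prob M (\<lambda>n. Bstat h a b eps n)"
  define q1 where "q1 = prob {\<omega>\<in>space M. eps 1 \<omega> \<le> t1}"
  define q2 where "q2 = prob {\<omega>\<in>space M. eps 1 \<omega> \<ge> t2}"
  define p where "p = q1 * q2"
  define g where "g = t2 - t1"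
  define A where "A i = (if odd i then {..t1} else {t2..})" for i :: nat
  define r where "r i = (if odd i then q1 else q2)" for i :: nat
  have p: "p > 0" using t unfolding p_def q1_def q2_def by simp
  have g: "g > 0" using t unfolding g_def by simp
  have epsi: "prob (eps i -` A i \<inter> space M) = r i" if i: "i \<ge> 1" for i
  proof -
    have m1: "eps i \<in> measurable M borel" "eps 1 \<in> measurable M borel"
      using meas[rule_format, OF i] meas[rule_format, of 1] by simp_all
    have Ai: "A i \<in> sets borel" by (simp add: A_def)
    have "prob (eps i -` A i \<inter> space M) = measure (distr M borel (eps i)) (A i)"
      by (rule measure_distr[OF m1(1) Ai, symmetric])
    also have "\<dots> = measure (distr M borel (eps 1)) (A i)" by (simp only: idd[rule_format, OF i])
    also have "\<dots> = prob (eps 1 -` A i \<inter> space M)"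
      by (rule measure_distr[OF m1(2) Ai])
    also have "\<dots> = r i"
    proof (cases "odd i")
      case True
      have "eps 1 -` A i \<inter> space M = {\<omega>\<in>space M. eps 1 \<omega> \<le> t1}" using True by (auto simp: A_def)
      then show ?thesis using True by (simp add: r_def q1_def)
    next
      case False
      have "eps 1 -` A i \<inter> space M = {\<omega>\<in>space M. eps 1 \<omega> \<ge> t2}" using False by (auto simp: A_def)
      then show ?thesis using False by (simp add: r_def q2_def)
    qed
    finally show ?thesis .
  qed
  have indD: "prob (\<Inter>i\<in>J. eps i -` A i \<inter> space M) = (\<Prod>i\<in>J. r i)"
    if J: "finite J" "J \<noteq> {}" "J \<subseteq> {1..}" for J
  proof -
    have "prob (\<Inter>i\<in>J. eps i -` A i \<inter> space M) = (\<Prod>i\<in>J. prob (eps i -` A i \<inter> space M))"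
      by (rule indep_varsD[OF ind]) (use J in \<open>auto simp: A_def\<close>)
    also have "\<dots> = (\<Prod>i\<in>J. r i)" using J by (intro prod.cong refl epsi) auto
    finally show ?thesis .
  qed
  define E where "E k = {\<omega>\<in>space M. eps (2*k+1) \<omega> \<le> t1 \<and> eps (2*k+2) \<omega> \<ge> t2}" for k :: nat
  have EG: "E k = (\<Inter>i\<in>{2*k+1, 2*k+2}. eps i -` A i \<inter> space M)" for k
    unfolding E_def A_def by auto
  have EE: "E k \<inter> E l = (\<Inter>i\<in>{2*k+1, 2*k+2, 2*l+1, 2*l+2}. eps i -` A i \<inter> space M)" for k l
    unfolding E_def A_def by auto
  have evE: "E k \<in> sets M" for k
  proof -
    have "eps (2*k+1) \<in> borel_measurable M" "eps (2*k+2) \<in> borel_measurable M" using meas by auto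
    then show ?thesis unfolding E_def by measurable
  qed
  have pE: "prob (E k) = p" for k
    unfolding EG by (subst indD) (auto simp: r_def p_def)
  have pEE: "prob (E k \<inter> E l) = p^2" if kl: "k \<noteq> l" for k l
  proof -
    have "prob (E k \<inter> E l) = (\<Prod>i\<in>{2*k+1, 2*k+2, 2*l+1, 2*l+2}. r i)"
      unfolding EE by (subst indD) auto
    also have "\<dots> = p^2" using kl by (simp add: r_def p_def power2_eq_square)
    finally show ?thesis .
  qed
  define N where "N m \<omega> = (\<Sum>k<m. indicator (E k) \<omega> :: real)" for m \<omega>
  have conc: "prob {\<omega>\<in>space M. N m \<omega> \<le> real m * p / 2} \<le> 4 / (real m * p)" if "m > 0" for m
    unfolding N_def by (rule count_conc[OF evE pE pEE that p])
  obtain C n0 where Cn: "\<forall>n\<ge>n0. prob {\<omega>\<in>space M. \<bar>Bstat h a b eps n \<omega>\<bar> > C} < 1/2"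
    using bp unfolding bounded_in_prob_def by (meson zero_less_divide_1_iff zero_less_numeral)
  define K where "K = \<bar>C\<bar> + \<bar>C0\<bar> + 1"
  define L where "L = 4 * K / (g * p)"
  define R where "R = max (real n0) (max (8 / p) (L^2))"
  define m where "m = nat \<lceil>R\<rceil> + 1"
  have m0: "m > 0" unfolding m_def by simp
  have "real m = real (nat \<lceil>R\<rceil>) + 1" unfolding m_def by (simp only: of_nat_add of_nat_1)
  then have mR: "real m \<ge> R" using real_nat_ceiling_ge[of R] by linarith
  have "real n0 \<le> R" "8 / p \<le> R" "L^2 \<le> R" unfolding R_def by auto
  then have "real n0 \<le> real m" and m8: "real m \<ge> 8 / p" and mL: "real m \<ge> L^2" using mR by linarith+
  then have mn0: "2 * m \<ge> n0" by simp
  have L0: "L \<ge> 0" unfolding L_def K_def using g p by simp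
  have sqm: "sqrt (real m) \<ge> L" using mL L0 real_sqrt_le_mono[OF mL] by simp
  have key: "g * (real m * p / 2) / sqrt (2 * real m) \<ge> K"
    by (rule real_bound[OF g p _ _ ]) (use m0 sqm K_def L_def in auto)
  define S where "S = {\<omega>\<in>space M. N m \<omega> \<le> real m * p / 2}"
  have S: "S \<in> sets M" unfolding S_def N_def using evE by measurable
  have sub: "space M - S \<subseteq> {\<omega>\<in>space M. \<bar>Bstat h a b eps (2*m) \<omega>\<bar> > C}"
  proof safe
    fix \<omega> assume \<omega>: "\<omega> \<in> space M" "\<omega> \<notin> S"
    then have Nm: "N m \<omega> > real m * p / 2" unfolding S_def by auto
    have "g * N m \<omega> = (\<Sum>k<m. g * indicator (E k) \<omega>)" unfolding N_def by (simp add: sum_distrib_left)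
    also have "\<dots> \<le> (\<Sum>k<m. \<bar>eps (2*k+2) \<omega> - eps (2*k+2-1) \<omega>\<bar>)"
    proof (intro sum_mono)
      fix k
      show "g * indicator (E k) \<omega> \<le> \<bar>eps (2*k+2) \<omega> - eps (2*k+2-1) \<omega>\<bar>"
        by (cases "\<omega> \<in> E k") (auto simp: E_def g_def)
    qed
    also have "\<dots> \<le> (\<Sum>i=2..2*m. \<bar>eps i \<omega> - eps (i-1) \<omega>\<bar>)"
      by (rule sum_even_le[where f="\<lambda>i. \<bar>eps i \<omega> - eps (i-1) \<omega>\<bar>"]) auto
    finally have gN: "g * N m \<omega> \<le> (\<Sum>i=2..2*m. \<bar>eps i \<omega> - eps (i-1) \<omega>\<bar>)" .
    have sp: "sqrt (2 * real m) > 0" using m0 by simp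
    have "g * (real m * p / 2) < g * N m \<omega>" using Nm g by simp
    then have "g * (real m * p / 2) / sqrt (2 * real m) < g * N m \<omega> / sqrt (2 * real m)"
      using sp by (rule divide_strict_right_mono)
    also have "\<dots> \<le> (\<Sum>i=2..2*m. \<bar>eps i \<omega> - eps (i-1) \<omega>\<bar>) / sqrt (2 * real m)"
      using gN sp by (intro divide_right_mono) auto
    also have "\<dots> \<le> Bstat h a b eps (2*m) \<omega> + C0"
      using Bstat_lower[OF C0, of "2*m" eps \<omega>] m0 by simp
    finally have "K < Bstat h a b eps (2*m) \<omega> + C0" using key by linarith
    then show "C < \<bar>Bstat h a b eps (2*m) \<omega>\<bar>" unfolding K_def by linarith
  qed
  have "prob (space M - S) = 1 - prob S" using S by (rule prob_compl)
  also have "\<dots> \<ge> 1 - 4 / (real m * p)" using conc[OF m0] unfolding S_def by linarith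
  moreover have "4 / (real m * p) \<le> 1/2"
  proof -
    have "8 \<le> real m * p" using m8 p by (simp add: divide_le_eq)
    then show ?thesis using p m0 by (simp add: divide_le_eq)
  qed
  ultimately have "prob (space M - S) \<ge> 1/2" by linarith
  moreover have "prob (space M - S) \<le> prob {\<omega>\<in>space M. \<bar>Bstat h a b eps (2*m) \<omega>\<bar> > C}"
  proof (rule finite_measure_mono[OF sub])
    have "(\<lambda>\<omega>. Bstat h a b eps (2*m) \<omega>) \<in> borel_measurable M" by (rule Bstat_meas[OF meas])
    then show "{\<omega>\<in>space M. \<bar>Bstat h a b eps (2*m) \<omega>\<bar> > C} \<in> sets M" by measurable
  qed
  moreover have "prob {\<omega>\<in>space M. \<bar>Bstat h a b eps (2*m) \<omega>\<bar> > C} < 1/2" using Cn mn0 by auto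
  ultimately show False by linarith
qed

end


theorem theorem4:
  fixes h :: "real \<Rightarrow> real" and a b :: real
  assumes "a < b"
    and "\<exists>h'. (\<forall>x\<in>{a..b}. (h has_real_derivative h' x) (at x within {a..b}))
              \<and> continuous_on {a..b} h' \<and> bounded (h' ` {a..b})"
  shows "Bseq (\<lambda>n. Bzero h a b n)
    \<and> (\<forall>(M :: 'a measure) (eps :: nat \<Rightarrow> 'a \<Rightarrow> real).
         prob_space M
         \<and> (\<forall>i\<ge>1. eps i \<in> borel_measurable M)
         \<and> prob_space.indep_vars M (\<lambda>_. borel) eps {1..}
         \<and> (\<forall>i\<ge>1. distr M borel (eps i) = distr M borel (eps 1))
         \<and> integrable M (eps 1) \<and> prob_space.expectation M (eps 1) = 0
         \<and> integrable M (\<lambda>\<omega>. (eps 1 \<omega>)\<^sup>2)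
         \<and> bounded_in_prob M (\<lambda>n. Bstat h a b eps n)
         \<longrightarrow> cdf (distr M borel (eps 1)) = (\<lambda>x. if 0 \<le> x then 1 else 0))"
proof -
  obtain h' where d: "\<forall>x\<in>{a..b}. (h has_real_derivative h' x) (at x within {a..b})"
    and bd: "bounded (h' ` {a..b})" using assms(2) by blast
  obtain K where K: "\<forall>x\<in>{a..b}. \<bar>h' x\<bar> \<le> K" using bd unfolding bounded_real by auto
  have C0: "\<forall>n. \<bar>Bzero h a b n\<bar> \<le> \<bar>K\<bar> * (b - a)"
    using Bzero_bound[OF assms(1) d K] by blast
  have B: "Bseq (\<lambda>n. Bzero h a b n)"
    by (rule BseqI'[where K="\<bar>K\<bar> * (b - a)"]) (use C0 in simp)
  have P: "cdf (distr M borel (eps 1)) = (\<lambda>x. if 0 \<le> x then 1 else 0)"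
    if H: "prob_space M"
         "\<forall>i\<ge>1. eps i \<in> borel_measurable M"
         "prob_space.indep_vars M (\<lambda>_. borel) eps {1..}"
         "\<forall>i\<ge>1. distr M borel (eps i) = distr M borel (eps 1)"
         "integrable M (eps 1)" "prob_space.expectation M (eps 1) = 0"
         "bounded_in_prob M (\<lambda>n. Bstat h a b eps n)"
    for M :: "'a measure" and eps :: "nat \<Rightarrow> 'a \<Rightarrow> real"
  proof (rule ccontr)
    assume ne: "cdf (distr M borel (eps 1)) \<noteq> (\<lambda>x. if 0 \<le> x then 1 else 0)"
    interpret prob_space M by (rule H(1))
    have m1: "eps 1 \<in> borel_measurable M" using H(2) by simp
    obtain t1 t2 where t: "t1 < t2" "prob {\<omega>\<in>space M. eps 1 \<omega> \<le> t1} > 0" "prob {\<omega>\<in>space M. eps 1 \<omega> \<ge> t2} > 0"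
      using nondeg[OF m1 H(5) H(6) ne] by blast
    have "\<not> bounded_in_prob M (\<lambda>n. Bstat h a b eps n)"
      by (rule main_contra[OF H(2) H(3) H(4) t C0])
    then show False using H(7) by blast
  qed
  show ?thesis using B P by blast
qed

end
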